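(* Let $1\le p<2$. There are constants $c_0,c_1,c_2>0$ such that for all $n,N\in\mathbb{N}$ with $c_0\sqrt{N}\le n\le c_1N$, $$ e_n^q(S_N,\mathcal{B}_p^N)\ge c_2\, n^{-2/p}N^{2/p-1}. $$
   Context: Throughout, $\log=\log_2$, $\mathbb{N}=\{1,2,\dots\}$, $\mathbb{N}_0=\mathbb{N}\cup\{0\}$, and $\mathbb{Z}[0,N)=\{0,\dots,N-1\}$. Quantum model. Let $D,K$ be nonempty sets, $F$ a nonempty set of functions $D\to K$, $G$ a normed space over $\mathbb{R}$ or $\mathbb{C}$, and $S:F\to G$. Let $H_m=(\mathbb{C}^2)^{\otimes m}$ with canonical basis $|i\rangle$, $i\in\mathbb{Z}[0,2^m)$ (via binary expansion). A quantum query is a tuple $Q=(m,m',m'',Z,\tau,\beta)$ with $m,m',m''\in\mathbb{N}$, $m'+m''\le m$, $\emptyset\ne Z\subseteq\mathbb{Z}[0,2^{m'})$, $\tau:Z\to D$, $\beta:K\to\mathbb{Z}[0,2^{m''})$. For $f\in F$ the unitary $Q_f$ on $H_m=H_{m'}\otimes H_{m''}\otimes H_{m-m'-m''}$ is given on basis states by $Q_f|i\rangle|x\rangle|y\rangle=|i\rangle|x\oplus\beta(f(\tau(i)))\rangle|y\rangle$ if $i\in Z$ and $Q_f|i\rangle|x\rangle|y\rangle=|i\rangle|x\rangle|y\rangle$ otherwise, where $\oplus$ is addition mod $2^{m''}$. A quantum algorithm with no measurement is $(Q,(U_j)_{j=0}^n)$ with $n\in\mathbb{N}_0$ and unitaries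 $U_j$ on $H_{m}$, $m=m(Q)$; it defines $A_f=U_nQ_fU_{n-1}\cdots U_1Q_fU_0$ and uses $n$ queries; $A_f(x,y)$ denotes its matrix entries in the canonical basis. A quantum algorithm from $F$ to $G$ with $k\in\mathbb{N}$ measurements is $A=((A_\ell)_{\ell=0}^{k-1},(b_\ell)_{\ell=0}^{k-1},\varphi)$, where each $A_\ell$ is an algorithm with no measurement on $m_\ell$ qubits, $b_0\in\mathbb{Z}[0,2^{m_0})$, $b_\ell:\prod_{i<\ell}\mathbb{Z}[0,2^{m_i})\to\mathbb{Z}[0,2^{m_\ell})$ for $1\le\ell\le k-1$, and $\varphi:\prod_{\ell<k}\mathbb{Z}[0,2^{m_\ell})\to G$. Its output on $f$ is the probability measure $A(f)$ on $G$ which is the distribution of $\varphi(x_0,\dots,x_{k-1})$, where $(x_0,\dots,x_{k-1})$ has probability $\prod_{\ell=0}^{k-1}|A_{\ell,f}(x_\ell,b_\ell(x_0,\dots,x_{\ell-1}))|^2$ (with $b_0$ a constant). Its number of queries is $n_q(A)=\sum_\ell n_q(A_\ell)$. For a random variable $\zeta$ with distribution $A(f)$, let $e(S,A,f)=\inf\{\varepsilon:\ \mathbf{P}\{\|S(f)-\zeta\|>\varepsilon\}\le 1/4\}$, $e(S,A,F)=\sup_{f\in F}e(S,A,f)$, and the $n$-th minimal query error is $e_n^q(S,F)=\inf\{e(S,A,F): A \text{ a quantum algorithm from } F \text{ to } G \text{ with } n_q(A)\le n\}$. Summation setting. For $N\in\mathbb{N}$, $D=\mathbb{Z}[0,N)$,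 $K=G=\mathbb{R}$. For $1\le p<\infty$, $L_p^N$ is the space of functions $f:\mathbb{Z}[0,N)\to\mathbb{R}$ with norm $\|f\|_{L_p^N}=\big(\frac1N\sum_{i=0}^{N-1}|f(i)|^p\big)^{1/p}$; $\mathcal{B}_p^N=\{f\in L_p^N:\|f\|_{L_p^N}\le 1\}$; and $S_N f=\frac1N\sum_{i=0}^{N-1}f(i)$. *)

theory Defs
  imports "HOL-Analysis.Analysis"
begin

text \<open>Basis states of H_m are indexed by 0..<2^m.  An operator on H_m is
represented by its matrix entries in the canonical basis, as a function
nat => nat => complex (only entries with indices < 2^m are relevant).\<close>

definition unitary_on :: "nat \<Rightarrow> (nat \<Rightarrow> nat \<Rightarrow> complex) \<Rightarrow> bool" where
  "unitary_on m U \<longleftrightarrow>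
     (\<forall>i<2^m. \<forall>j<2^m. (\<Sum>k<2^m. cnj (U k i) * U k j) = (if i = j then 1 else 0))"

definition mmult :: "nat \<Rightarrow> (nat \<Rightarrow> nat \<Rightarrow> complex) \<Rightarrow> (nat \<Rightarrow> nat \<Rightarrow> complex)
    \<Rightarrow> nat \<Rightarrow> nat \<Rightarrow> complex" where
  "mmult m A B x y = (\<Sum>z<2^m. A x z * B z y)"

text \<open>A quantum query Q = (m, m', m'', Z, tau, beta).\<close>
type_synonym ('d, 'k) query = "nat \<times> nat \<times> nat \<times> nat set \<times> (nat \<Rightarrow> 'd) \<times> ('k \<Rightarrow> nat)"

definition query_qubits :: "('d, 'k) query \<Rightarrow> nat" where
  "query_qubits Q = fst Q"

definition valid_query :: "'d set \<Rightarrow> ('d, 'k) query \<Rightarrow> bool" where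
  "valid_query D Q \<longleftrightarrow> (case Q of (m, m', m'', Z, \<tau>, \<beta>) \<Rightarrow>
     1 \<le> m \<and> 1 \<le> m' \<and> 1 \<le> m'' \<and> m' + m'' \<le> m \<and> Z \<noteq> {} \<and> Z \<subseteq> {..<2^m'} \<and>
     (\<forall>i\<in>Z. \<tau> i \<in> D) \<and> (\<forall>k. \<beta> k < 2^m''))"

text \<open>Action of Q_f on basis states: H_m = H_m' (x) H_m'' (x) H_(m-m'-m''), the basis
state |i>|x>|y> having index i*2^(m-m') + x*2^(m-m'-m'') + y.\<close>
definition query_basis :: "('d, 'k) query \<Rightarrow> ('d \<Rightarrow> 'k) \<Rightarrow> nat \<Rightarrow> nat" where
  "query_basis Q f b = (case Q of (m, m', m'', Z, \<tau>, \<beta>) \<Rightarrow>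
     (let r = m - m' - m'';
          i = b div 2^(m'' + r);
          x = (b div 2^r) mod 2^m'';
          y = b mod 2^r
      in if i \<in> Z then i * 2^(m'' + r) + ((x + \<beta> (f (\<tau> i))) mod 2^m'') * 2^r + y
         else b))"

definition query_mat :: "('d, 'k) query \<Rightarrow> ('d \<Rightarrow> 'k) \<Rightarrow> nat \<Rightarrow> nat \<Rightarrow> complex" where
  "query_mat Q f a b = (if a = query_basis Q f b then 1 else 0)"

text \<open>A quantum algorithm with no measurement: (Q, n, U) with unitaries U 0, ..., U n.\<close>
type_synonym ('d, 'k) qalg0 = "('d, 'k) query \<times> nat \<times> (nat \<Rightarrow> nat \<Rightarrow> nat \<Rightarrow> complex)"

definition qalg0_qubits :: "('d, 'k) qalg0 \<Rightarrow> nat" where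
  "qalg0_qubits A = query_qubits (fst A)"

definition qalg0_queries :: "('d, 'k) qalg0 \<Rightarrow> nat" where
  "qalg0_queries A = fst (snd A)"

definition valid_qalg0 :: "'d set \<Rightarrow> ('d, 'k) qalg0 \<Rightarrow> bool" where
  "valid_qalg0 D A \<longleftrightarrow> (case A of (Q, n, U) \<Rightarrow>
     valid_query D Q \<and> (\<forall>j\<le>n. unitary_on (query_qubits Q) (U j)))"

fun alg_prod :: "('d, 'k) query \<Rightarrow> (nat \<Rightarrow> nat \<Rightarrow> nat \<Rightarrow> complex) \<Rightarrow> ('d \<Rightarrow> 'k)
    \<Rightarrow> nat \<Rightarrow> nat \<Rightarrow> nat \<Rightarrow> complex" where
  "alg_prod Q U f 0 = U 0"
| "alg_prod Q U f (Suc j) =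
     mmult (query_qubits Q) (U (Suc j)) (mmult (query_qubits Q) (query_mat Q f) (alg_prod Q U f j))"

definition qalg0_mat :: "('d, 'k) qalg0 \<Rightarrow> ('d \<Rightarrow> 'k) \<Rightarrow> nat \<Rightarrow> nat \<Rightarrow> complex" where
  "qalg0_mat A f = (case A of (Q, n, U) \<Rightarrow> alg_prod Q U f n)"

text \<open>A quantum algorithm with k measurements: ((A_l)_{l<k}, b, phi), where
b l xs is b_l(x_0,...,x_(l-1)) for the list xs of previous outcomes (b 0 [] = b_0).\<close>
type_synonym ('d, 'k, 'g) qalg =
  "('d, 'k) qalg0 list \<times> (nat \<Rightarrow> nat list \<Rightarrow> nat) \<times> (nat list \<Rightarrow> 'g)"

definition qalg_comps :: "('d, 'k, 'g) qalg \<Rightarrow> ('d, 'k) qalg0 list" where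
  "qalg_comps A = fst A"

definition qalg_b :: "('d, 'k, 'g) qalg \<Rightarrow> nat \<Rightarrow> nat list \<Rightarrow> nat" where
  "qalg_b A = fst (snd A)"

definition qalg_phi :: "('d, 'k, 'g) qalg \<Rightarrow> nat list \<Rightarrow> 'g" where
  "qalg_phi A = snd (snd A)"

definition qalg_outcomes :: "('d, 'k, 'g) qalg \<Rightarrow> nat list set" where
  "qalg_outcomes A = {xs. length xs = length (qalg_comps A) \<and>
     (\<forall>l<length xs. xs ! l < 2 ^ qalg0_qubits (qalg_comps A ! l))}"

definition valid_qalg :: "'d set \<Rightarrow> ('d, 'k, 'g) qalg \<Rightarrow> bool" where
  "valid_qalg D A \<longleftrightarrow>
     length (qalg_comps A) \<ge> 1 \<and>
     (\<forall>l<length (qalg_comps A). valid_qalg0 D (qalg_comps A ! l)) \<and>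
     (\<forall>l<length (qalg_comps A). \<forall>xs. length xs = l \<and>
        (\<forall>i<l. xs ! i < 2 ^ qalg0_qubits (qalg_comps A ! i)) \<longrightarrow>
        qalg_b A l xs < 2 ^ qalg0_qubits (qalg_comps A ! l))"

definition qalg_queries :: "('d, 'k, 'g) qalg \<Rightarrow> nat" where
  "qalg_queries A = (\<Sum>l<length (qalg_comps A). qalg0_queries (qalg_comps A ! l))"

definition qalg_prob :: "('d, 'k, 'g) qalg \<Rightarrow> ('d \<Rightarrow> 'k) \<Rightarrow> nat list \<Rightarrow> real" where
  "qalg_prob A f xs = (\<Prod>l<length (qalg_comps A).
     (cmod (qalg0_mat (qalg_comps A ! l) f (xs ! l) (qalg_b A l (take l xs))))\<^sup>2)"

definition qerr_f :: "(('d \<Rightarrow> 'k) \<Rightarrow> 'g::real_normed_vector) \<Rightarrow> ('d, 'k, 'g) qalg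
    \<Rightarrow> ('d \<Rightarrow> 'k) \<Rightarrow> ereal" where
  "qerr_f S A f = Inf {ereal eps | eps.
     (\<Sum>xs\<in>{xs \<in> qalg_outcomes A. norm (S f - qalg_phi A xs) > eps}. qalg_prob A f xs) \<le> 1/4}"

definition qerr :: "(('d \<Rightarrow> 'k) \<Rightarrow> 'g::real_normed_vector) \<Rightarrow> ('d, 'k, 'g) qalg
    \<Rightarrow> ('d \<Rightarrow> 'k) set \<Rightarrow> ereal" where
  "qerr S A F = (SUP f\<in>F. qerr_f S A f)"

definition min_query_error :: "'d set \<Rightarrow> (('d \<Rightarrow> 'k) \<Rightarrow> 'g::real_normed_vector)
    \<Rightarrow> ('d \<Rightarrow> 'k) set \<Rightarrow> nat \<Rightarrow> ereal" where
  "min_query_error D S F n =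
     (INF A\<in>{A :: ('d, 'k, 'g) qalg. valid_qalg D A \<and> qalg_queries A \<le> n}. qerr S A F)"

text \<open>Functions on Z[0,N) are represented as nat => real vanishing outside {..<N}.\<close>
definition Lp_norm :: "nat \<Rightarrow> real \<Rightarrow> (nat \<Rightarrow> real) \<Rightarrow> real" where
  "Lp_norm N p f = ((1 / real N) * (\<Sum>i<N. \<bar>f i\<bar> powr p)) powr (1 / p)"

definition Lp_ball :: "nat \<Rightarrow> real \<Rightarrow> (nat \<Rightarrow> real) set" where
  "Lp_ball N p = {f. (\<forall>i\<ge>N. f i = 0) \<and> Lp_norm N p f \<le> 1}"

definition S_mean :: "nat \<Rightarrow> (nat \<Rightarrow> real) \<Rightarrow> real" where
  "S_mean N f = (1 / real N) * (\<Sum>i<N. f i)"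

end

theory Submission
  imports Defs
begin

definition mv :: "nat \<Rightarrow> (nat\<Rightarrow>nat\<Rightarrow>complex) \<Rightarrow> (nat\<Rightarrow>complex) \<Rightarrow> nat \<Rightarrow> complex" where
  "mv m A u z = (\<Sum>z'<2^m. A z z' * u z')"
definition ip :: "nat \<Rightarrow> (nat\<Rightarrow>complex) \<Rightarrow> (nat\<Rightarrow>complex) \<Rightarrow> complex" where
  "ip m u w = (\<Sum>z<2^m. cnj (u z) * w z)"
definition nrm2 :: "nat \<Rightarrow> (nat\<Rightarrow>complex) \<Rightarrow> real" where
  "nrm2 m u = (\<Sum>z<2^m. (cmod (u z))^2)"

lemma sum_swap3: "(\<Sum>z\<in>A. \<Sum>a\<in>B. \<Sum>b\<in>C. F z a b) = (\<Sum>a\<in>B. \<Sum>b\<in>C. \<Sum>z\<in>A. F z a b)"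
proof -
  have "(\<Sum>z\<in>A. \<Sum>a\<in>B. \<Sum>b\<in>C. F z a b) = (\<Sum>a\<in>B. \<Sum>z\<in>A. \<Sum>b\<in>C. F z a b)" by (rule sum.swap)
  also have "\<dots> = (\<Sum>a\<in>B. \<Sum>b\<in>C. \<Sum>z\<in>A. F z a b)" by (intro sum.cong refl sum.swap)
  finally show ?thesis .
qed

lemma ip_unitary:
  assumes "unitary_on m U"
  shows "ip m (mv m U u) (mv m U w) = ip m u w"
proof -
  have "ip m (mv m U u) (mv m U w) = (\<Sum>z<2^m. \<Sum>a<2^m. \<Sum>b<2^m. cnj (U z a) * cnj (u a) * (U z b * w b))"
    by (simp add: ip_def mv_def sum_distrib_left sum_distrib_right, rule sum.cong[OF refl], rule sum.swap)
  also have "\<dots> = (\<Sum>a<2^m. \<Sum>b<2^m. cnj (u a) * w b * (\<Sum>z<2^m. cnj (U z a) * U z b))"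
    by (subst sum_swap3) (simp add: sum_distrib_left algebra_simps)
  also have "\<dots> = (\<Sum>a<2^m. \<Sum>b<2^m. cnj (u a) * w b * (if a = b then 1 else 0))"
    using assms unfolding unitary_on_def by (intro sum.cong) auto
  also have "\<dots> = ip m u w"
    by (simp add: ip_def if_distrib cong: if_cong)
  finally show ?thesis .
qed

lemma cnj_mult_self: "cnj z * z = complex_of_real ((cmod z)^2)"
  by (metis complex_norm_square of_real_power mult.commute)

lemma ip_self: "ip m u u = complex_of_real (nrm2 m u)"
  unfolding ip_def nrm2_def cnj_mult_self by simp

lemma nrm2_unitary:
  assumes "unitary_on m U"
  shows "nrm2 m (mv m U u) = nrm2 m u"
  using ip_unitary[OF assms, of u u] by (simp add: ip_self)

lemma nrm2_nonneg: "nrm2 m u \<ge> 0"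
  by (simp add: nrm2_def sum_nonneg)

lemma mv_add: "mv m A (\<lambda>z. u z + w z) = (\<lambda>z. mv m A u z + mv m A w z)"
  by (auto simp: mv_def algebra_simps sum.distrib)

lemma ip_add1: "ip m (\<lambda>z. u z + v z) w = ip m u w + ip m v w"
  by (simp add: ip_def algebra_simps sum.distrib)
lemma ip_add2: "ip m w (\<lambda>z. u z + v z) = ip m w u + ip m w v"
  by (simp add: ip_def algebra_simps sum.distrib)

lemma ip_bound:
  assumes "a > 0"
  shows "cmod (cnj \<alpha> * \<beta> * ip m s t) \<le> (a * (cmod \<alpha>)^2 * nrm2 m s + (cmod \<beta>)^2 * nrm2 m t / a) / 2"
proof -
  have "cmod (cnj \<alpha> * \<beta> * ip m s t) \<le> (\<Sum>z<2^m. cmod \<alpha> * cmod (s z) * (cmod \<beta> * cmod (t z)))"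
    unfolding ip_def sum_distrib_left
    by (rule order_trans[OF norm_sum]) (simp add: norm_mult algebra_simps)
  also have "\<dots> \<le> (\<Sum>z<2^m. (a * (cmod \<alpha> * cmod (s z))^2 + (cmod \<beta> * cmod (t z))^2 / a) / 2)"
  proof (rule sum_mono)
    fix z
    have "\<And>x y::real. x * y \<le> (a * x^2 + y^2 / a) / 2"
    proof -
      fix x y :: real
      have "0 \<le> (a * x - y)^2 / a" using assms by simp
      also have "\<dots> = a * x^2 - 2 * x * y + y^2 / a" using assms
        by (simp add: power2_eq_square field_simps)
      finally show "x * y \<le> (a * x^2 + y^2 / a) / 2" by simp
    qed
    then show "cmod \<alpha> * cmod (s z) * (cmod \<beta> * cmod (t z)) \<le> (a * (cmod \<alpha> * cmod (s z))^2 + (cmod \<beta> * cmod (t z))^2 / a) / 2" .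
  qed
  also have "\<dots> = (\<Sum>z<2^m. (a * (cmod \<alpha>)^2 * (cmod (s z))^2 + (cmod \<beta>)^2 * (cmod (t z))^2 / a) / 2)"
    by (simp add: power_mult_distrib mult.assoc)
  also have "\<dots> = (a * (cmod \<alpha>)^2 * nrm2 m s + (cmod \<beta>)^2 * nrm2 m t / a) / 2"
    unfolding nrm2_def sum_divide_distrib[symmetric] sum.distrib sum_distrib_left by simp
  finally show ?thesis .
qed


lemma enc_lt: "x < (d::nat) \<Longrightarrow> y < c \<Longrightarrow> x * c + y < d * c"
proof -
  assume a: "x < d" "y < c"
  have "x * c + y < x * c + c" using a by simp
  also have "\<dots> = Suc x * c" by simp
  also have "\<dots> \<le> d * c" using a by (intro mult_le_mono1) simp
  finally show ?thesis .
qed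

lemma enc_div: "x < (d::nat) \<Longrightarrow> y < c \<Longrightarrow> (i * (d * c) + x * c + y) div (d * c) = i"
  using enc_lt[of x d y c] by (simp add: add.assoc)

lemma enc_re: "i * (d * c) + x * c + y = (i * d + x) * (c::nat) + y"
  by (simp add: algebra_simps)

lemma enc_mod: "x < (d::nat) \<Longrightarrow> y < c \<Longrightarrow> (i * (d * c) + x * c + y) mod c = y"
  unfolding enc_re by simp

lemma enc_mid: "x < (d::nat) \<Longrightarrow> y < c \<Longrightarrow> ((i * (d * c) + x * c + y) div c) mod d = x"
proof -
  assume a: "x < d" "y < c"
  then have "(i * (d * c) + x * c + y) div c = i * d + x"
    unfolding enc_re by simp
  then show ?thesis using a by simp
qed

lemma dec_eq: "(b::nat) = (b div (d * c)) * (d * c) + ((b div c) mod d) * c + b mod c"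
proof -
  have "b = (b div c) * c + b mod c" by simp
  also have "b div c = (b div c div d) * d + (b div c) mod d" by simp
  also have "b div c div d = b div (d * c)" by (simp add: div_mult2_eq mult.commute)
  finally show ?thesis by (simp add: algebra_simps)
qed


lemma qb_unfold:
  assumes "Q = (m,m1,m2,Z,\<tau>,\<beta>)" "c = 2^(m-m1-m2)" "d = 2^m2"
  shows "query_basis Q f b =
    (if b div (d * c) \<in> Z then b div (d * c) * (d * c) + (((b div c) mod d + \<beta> (f (\<tau> (b div (d * c))))) mod d) * c + b mod c else b)"
  using assms by (simp add: query_basis_def power_add Let_def mult.commute)

lemma qb_lt:
  assumes "valid_query D Q" "Q = (m,m1,m2,Z,\<tau>,\<beta>)" "b < 2^m"
  shows "query_basis Q f b < 2^m"
proof -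
  define c :: nat where "c = 2^(m-m1-m2)"
  define d :: nat where "d = 2^m2"
  have v: "m1 + m2 \<le> m" "Z \<subseteq> {..<2^m1}" using assms(1,2) by (auto simp: valid_query_def)
  have mm: "(2::nat)^m = 2^m1 * (d * c)"
    unfolding c_def d_def power_add[symmetric] using v by simp
  have c0: "c > 0" "d > 0" by (auto simp: c_def d_def)
  note U = qb_unfold[OF assms(2) c_def d_def]
  show ?thesis
  proof (cases "b div (d*c) \<in> Z")
    case True
    then have i: "b div (d*c) < 2^m1" using v by auto
    have "b div (d * c) * (d * c) + ((b div c) mod d + \<beta> (f (\<tau> (b div (d*c))))) mod d * c + b mod c
          < Suc (b div (d * c)) * (d * c)"
      using enc_lt[of "((b div c) mod d + \<beta> (f (\<tau> (b div (d*c))))) mod d" d "b mod c" c] c0 by simp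
    also have "\<dots> \<le> 2^m1 * (d * c)" using i by (intro mult_le_mono1) simp
    finally show ?thesis using True unfolding U mm by simp
  next
    case False
    then show ?thesis using assms(3) unfolding U by simp
  qed
qed

lemma qb_reg:
  assumes "Q = (m,m1,m2,Z,\<tau>,\<beta>)" "c = 2^(m-m1-m2)" "d = 2^m2"
  shows "query_basis Q f b div (d * c) = b div (d * c)"
proof -
  have c0: "c > 0" "d > 0" using assms by auto
  show ?thesis unfolding qb_unfold[OF assms]
    using enc_div[of "((b div c) mod d + \<beta> (f (\<tau> (b div (d*c))))) mod d" d "b mod c" c] c0 by simp
qed

lemma modcancel: "(x1::nat) < d \<Longrightarrow> x2 < d \<Longrightarrow> (x1 + k) mod d = (x2 + k) mod d \<Longrightarrow> x1 = x2"
proof -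
  assume a: "x1 < d" "x2 < d" "(x1 + k) mod d = (x2 + k) mod d"
  then have "(int x1 + int k) mod int d = (int x2 + int k) mod int d"
    by (metis of_nat_add zmod_int)
  then have "(int x1 + int k - int k) mod int d = (int x2 + int k - int k) mod int d"
    by (metis mod_diff_left_eq)
  then have "int x1 mod int d = int x2 mod int d" by simp
  then show ?thesis using a by (metis mod_less zmod_int of_nat_eq_iff)
qed

lemma qb_inj:
  assumes "valid_query D Q" "Q = (m,m1,m2,Z,\<tau>,\<beta>)"
    and eq: "query_basis Q f b = query_basis Q f b'"
  shows "b = b'"
proof -
  define c :: nat where "c = 2^(m-m1-m2)"
  define d :: nat where "d = 2^m2"
  have c0: "c > 0" "d > 0" by (auto simp: c_def d_def)
  note U = qb_unfold[OF assms(2) c_def d_def]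
  have ii: "b div (d*c) = b' div (d*c)"
    using qb_reg[OF assms(2) c_def d_def, of f b] qb_reg[OF assms(2) c_def d_def, of f b'] eq by simp
  show ?thesis
  proof (cases "b div (d*c) \<in> Z")
    case False
    then show ?thesis using eq ii unfolding U by simp
  next
    case True
    define bb where "bb = \<beta> (f (\<tau> (b div (d*c))))"
    have e: "b div (d * c) * (d * c) + (((b div c) mod d + bb) mod d) * c + b mod c =
             b' div (d * c) * (d * c) + (((b' div c) mod d + bb) mod d) * c + b' mod c"
      using eq True ii unfolding U bb_def by simp
    have y: "b mod c = b' mod c"
      using arg_cong[OF e, of "\<lambda>t. t mod c"] enc_mod[of _ d _ c] c0
      by (metis mod_less_divisor pos_mod_bound mod_mod_trivial)
    have x: "((b div c) mod d + bb) mod d = ((b' div c) mod d + bb) mod d"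
      using arg_cong[OF e, of "\<lambda>t. (t div c) mod d"] enc_mid[of _ d _ c] c0
      by (metis mod_less_divisor)
    then have "(b div c) mod d = (b' div c) mod d"
      using modcancel[of "(b div c) mod d" d "(b' div c) mod d" bb] c0 by simp
    then show ?thesis using y ii dec_eq[of b d c] dec_eq[of b' d c] by metis
  qed
qed


lemma qm_unitary:
  assumes "valid_query D Q"
  shows "unitary_on (query_qubits Q) (query_mat Q f)"
proof -
  obtain m m1 m2 Z \<tau> \<beta> where Q: "Q = (m,m1,m2,Z,\<tau>,\<beta>)" by (cases Q) auto
  have qq: "query_qubits Q = m" using Q by (simp add: query_qubits_def)
  show ?thesis unfolding unitary_on_def qq
  proof (intro allI impI)
    fix i j :: nat assume ij: "i < 2^m" "j < 2^m"
    have "(\<Sum>k<2^m. cnj (query_mat Q f k i) * query_mat Q f k j)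
        = (\<Sum>k<2^m. if k = query_basis Q f i then (if query_basis Q f i = query_basis Q f j then 1 else 0) else 0)"
      by (intro sum.cong) (auto simp: query_mat_def)
    also have "\<dots> = (if query_basis Q f i = query_basis Q f j then 1 else 0)"
      using qb_lt[OF assms Q ij(1), of f] by simp
    also have "\<dots> = (if i = j then 1 else 0)"
      using qb_inj[OF assms Q, of f i j] by auto
    finally show "(\<Sum>k<2^m. cnj (query_mat Q f k i) * query_mat Q f k j) = (if i = j then 1 else 0)" .
  qed
qed

definition qaff :: "('d, 'k) query \<Rightarrow> 'd \<Rightarrow> nat \<Rightarrow> bool" where
  "qaff Q pos b = (case Q of (m,m1,m2,Z,\<tau>,\<beta>) \<Rightarrow>
     b div (2^m2 * 2^(m-m1-m2)) \<in> Z \<and> \<tau> (b div (2^m2 * 2^(m-m1-m2))) = pos)"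

definition restr :: "('d, 'k) query \<Rightarrow> 'd \<Rightarrow> (nat \<Rightarrow> complex) \<Rightarrow> nat \<Rightarrow> complex" where
  "restr Q pos u z = (if qaff Q pos z then u z else 0)"

definition unrestr :: "('d, 'k) query \<Rightarrow> 'd \<Rightarrow> (nat \<Rightarrow> complex) \<Rightarrow> nat \<Rightarrow> complex" where
  "unrestr Q pos u z = (if qaff Q pos z then 0 else u z)"

lemma qb_same:
  assumes "\<forall>j. j \<noteq> pos \<longrightarrow> f j = g j" "\<not> qaff Q pos b"
  shows "query_basis Q f b = query_basis Q g b"
proof -
  obtain m m1 m2 Z \<tau> \<beta> where Q: "Q = (m,m1,m2,Z,\<tau>,\<beta>)" by (cases Q) auto
  show ?thesis
    using assms unfolding qb_unfold[OF Q refl refl] by (auto simp: qaff_def Q)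
qed

lemma mv_same_unaff:
  assumes "\<forall>j. j \<noteq> pos \<longrightarrow> f j = g j" "\<forall>z. qaff Q pos z \<longrightarrow> u z = 0"
  shows "mv m (query_mat Q f) u = mv m (query_mat Q g) u"
proof
  fix z
  show "mv m (query_mat Q f) u z = mv m (query_mat Q g) u z"
    unfolding mv_def
  proof (intro sum.cong refl)
    fix z' show "query_mat Q f z z' * u z' = query_mat Q g z z' * u z'"
      using assms qb_same[OF assms(1), of Q z'] by (cases "qaff Q pos z'") (auto simp: query_mat_def)
  qed
qed

lemma restr_sum_le:
  assumes "finite S"
  shows "(\<Sum>pos\<in>S. nrm2 m (restr Q pos u)) \<le> nrm2 m u"
proof -
  obtain mm m1 m2 Z \<tau> \<beta> where Q: "Q = (mm,m1,m2,Z,\<tau>,\<beta>)" by (cases Q) auto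
  define r where "r z = z div (2^m2 * 2^(mm-m1-m2))" for z :: nat
  have "(\<Sum>pos\<in>S. nrm2 m (restr Q pos u)) = (\<Sum>z<2^m. \<Sum>pos\<in>S. if r z \<in> Z \<and> \<tau> (r z) = pos then (cmod (u z))^2 else 0)"
    unfolding nrm2_def restr_def qaff_def Q r_def
    by (subst sum.swap) (intro sum.cong refl, auto)
  also have "\<dots> \<le> (\<Sum>z<2^m. (cmod (u z))^2)"
  proof (rule sum_mono)
    fix z
    have "(\<Sum>pos\<in>S. if r z \<in> Z \<and> \<tau> (r z) = pos then (cmod (u z))^2 else 0)
        = (if r z \<in> Z \<and> \<tau> (r z) \<in> S then (cmod (u z))^2 else 0)"
      using assms by (cases "r z \<in> Z") (auto simp: sum.delta)
    then show "(\<Sum>pos\<in>S. if r z \<in> Z \<and> \<tau> (r z) = pos then (cmod (u z))^2 else 0) \<le> (cmod (u z))^2"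
      by simp
  qed
  finally show ?thesis by (simp add: nrm2_def)
qed

lemma ip_zero: assumes "\<And>z. cnj (u z) * w z = 0" shows "ip m u w = 0"
  unfolding ip_def by (rule sum.neutral) (rule ballI, rule assms)

lemma ip_split:
  assumes "\<forall>j. j \<noteq> pos \<longrightarrow> f j = g j" "valid_query D Q" "m = query_qubits Q"
  shows "ip m (mv m (query_mat Q f) u) (mv m (query_mat Q g) w) - ip m u w
       = ip m (mv m (query_mat Q f) (restr Q pos u)) (mv m (query_mat Q g) (restr Q pos w))
         - ip m (restr Q pos u) (restr Q pos w)"
proof -
  let ?qf = "mv m (query_mat Q f)" and ?qg = "mv m (query_mat Q g)"
  let ?ua = "restr Q pos u" and ?uu = "unrestr Q pos u"
  let ?wa = "restr Q pos w" and ?wu = "unrestr Q pos w"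
  have uf: "unitary_on m (query_mat Q f)" "unitary_on m (query_mat Q g)"
    using qm_unitary[OF assms(2)] assms(3) by auto
  have u: "u = (\<lambda>z. ?ua z + ?uu z)" "w = (\<lambda>z. ?wa z + ?wu z)"
    by (auto simp: restr_def unrestr_def)
  have s1: "?qf ?uu = ?qg ?uu" "?qg ?wu = ?qf ?wu"
    using mv_same_unaff[OF assms(1)] mv_same_unaff[of pos g f] assms(1)
    by (auto simp: unrestr_def)
  have "ip m (?qf u) (?qg w) = ip m (?qf ?ua) (?qg ?wa) + ip m (?qf ?ua) (?qf ?wu)
        + ip m (?qg ?uu) (?qg ?wa) + ip m (?qg ?uu) (?qg ?wu)"
    apply (subst (1) u(1), subst u(2))
    unfolding mv_add ip_add1 ip_add2 s1 by simp
  also have "\<dots> = ip m (?qf ?ua) (?qg ?wa) + ip m ?ua ?wu + ip m ?uu ?wa + ip m ?uu ?wu"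
    using ip_unitary[OF uf(1)] ip_unitary[OF uf(2)] by simp
  finally have 1: "ip m (?qf u) (?qg w) = ip m (?qf ?ua) (?qg ?wa) + ip m ?ua ?wu + ip m ?uu ?wa + ip m ?uu ?wu" .
  have 0: "ip m ?ua ?wu = 0" "ip m ?uu ?wa = 0"
    by (auto intro!: ip_zero simp: restr_def unrestr_def)
  have 2: "ip m u w = ip m ?ua ?wa + ip m ?uu ?wu"
    unfolding ip_def by (subst sum.distrib[symmetric]) (intro sum.cong refl, auto simp: restr_def unrestr_def)
  show ?thesis using 1 2 0 by simp
qed


definition col :: "('d, 'k) query \<Rightarrow> (nat \<Rightarrow> nat \<Rightarrow> nat \<Rightarrow> complex) \<Rightarrow> ('d \<Rightarrow> 'k) \<Rightarrow> nat \<Rightarrow> nat \<Rightarrow> nat \<Rightarrow> complex" where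
  "col Q U f j c = (\<lambda>z. alg_prod Q U f j z c)"

lemma col_suc: "col Q U f (Suc j) c = mv (query_qubits Q) (U (Suc j)) (mv (query_qubits Q) (query_mat Q f) (col Q U f j c))"
  by (auto simp: col_def mv_def mmult_def)

lemma col_norm:
  assumes "valid_qalg0 D (Q,n,U)" "c < 2^query_qubits Q"
  shows "j \<le> n \<Longrightarrow> nrm2 (query_qubits Q) (col Q U f j c) = 1"
proof (induction j)
  case 0
  have "unitary_on (query_qubits Q) (U 0)" using assms(1) by (auto simp: valid_qalg0_def)
  then have "ip (query_qubits Q) (col Q U f 0 c) (col Q U f 0 c) = 1"
    using assms(2) by (auto simp: unitary_on_def ip_def col_def)
  then show ?case by (simp add: ip_self)
next
  case (Suc j)
  have vq: "valid_query D Q" and uu: "unitary_on (query_qubits Q) (U (Suc j))"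
    using assms(1) Suc.prems by (auto simp: valid_qalg0_def)
  show ?case unfolding col_suc nrm2_unitary[OF uu] nrm2_unitary[OF qm_unitary[OF vq]]
    using Suc by simp
qed

lemma am_gm_bound_sum:
  fixes x y :: complex
  assumes "cmod x \<le> A" "cmod y \<le> B"
  shows "cmod (x - y) \<le> A + B"
  using assms norm_triangle_ineq4[of x y] by simp

lemma comp_bound:
  assumes "valid_qalg0 D (Q,n,U)" "c < 2^m" "m = query_qubits Q"
    and diff: "\<forall>j. j \<noteq> pos \<longrightarrow> f j = g j" and a: "a > 0"
  shows "j \<le> n \<Longrightarrow> cmod (cnj \<alpha> * \<beta> * ip m (col Q U f j c) (col Q U g j c) - cnj \<alpha> * \<beta>)
     \<le> (\<Sum>i<j. a * (cmod \<alpha>)^2 * nrm2 m (restr Q pos (col Q U f i c))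
               + (cmod \<beta>)^2 * nrm2 m (restr Q pos (col Q U g i c)) / a)"
proof (induction j)
  case 0
  have "unitary_on m (U 0)" using assms(1,3) by (auto simp: valid_qalg0_def)
  then have "ip m (col Q U f 0 c) (col Q U g 0 c) = 1"
    using assms(2) by (auto simp: unitary_on_def ip_def col_def)
  then show ?case by simp
next
  case (Suc j)
  have vq: "valid_query D Q" and uu: "unitary_on m (U (Suc j))"
    using assms(1,3) Suc.prems by (auto simp: valid_qalg0_def)
  have qf: "unitary_on m (query_mat Q h)" for h using qm_unitary[OF vq] assms(3) by simp
  let ?u = "col Q U f j c" and ?w = "col Q U g j c"
  let ?ua = "restr Q pos ?u" and ?wa = "restr Q pos ?w"
  let ?k = "cnj \<alpha> * \<beta>"
  have "ip m (col Q U f (Suc j) c) (col Q U g (Suc j) c)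
      = ip m (mv m (query_mat Q f) ?u) (mv m (query_mat Q g) ?w)"
    unfolding col_suc assms(3)[symmetric] ip_unitary[OF uu] ..
  also have "\<dots> = ip m ?u ?w + (ip m (mv m (query_mat Q f) ?ua) (mv m (query_mat Q g) ?wa) - ip m ?ua ?wa)"
    using ip_split[OF diff vq assms(3), of ?u ?w] by (simp add: algebra_simps)
  finally have eq: "ip m (col Q U f (Suc j) c) (col Q U g (Suc j) c) = ip m ?u ?w + (ip m (mv m (query_mat Q f) ?ua) (mv m (query_mat Q g) ?wa) - ip m ?ua ?wa)" .
  have e: "?k * ip m (col Q U f (Suc j) c) (col Q U g (Suc j) c) - ?k
     = (?k * ip m ?u ?w - ?k) + (?k * ip m (mv m (query_mat Q f) ?ua) (mv m (query_mat Q g) ?wa) - ?k * ip m ?ua ?wa)"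
    unfolding eq by (simp add: algebra_simps)
  have b1: "cmod (?k * ip m (mv m (query_mat Q f) ?ua) (mv m (query_mat Q g) ?wa))
     \<le> (a * (cmod \<alpha>)^2 * nrm2 m ?ua + (cmod \<beta>)^2 * nrm2 m ?wa / a) / 2"
    using ip_bound[OF a, of \<alpha> \<beta> m "mv m (query_mat Q f) ?ua" "mv m (query_mat Q g) ?wa"]
    unfolding nrm2_unitary[OF qf] .
  have b2: "cmod (?k * ip m ?ua ?wa) \<le> (a * (cmod \<alpha>)^2 * nrm2 m ?ua + (cmod \<beta>)^2 * nrm2 m ?wa / a) / 2"
    using ip_bound[OF a] .
  have "cmod (?k * ip m (col Q U f (Suc j) c) (col Q U g (Suc j) c) - ?k)
     \<le> cmod (?k * ip m ?u ?w - ?k) + cmod (?k * ip m (mv m (query_mat Q f) ?ua) (mv m (query_mat Q g) ?wa) - ?k * ip m ?ua ?wa)"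
    unfolding e by (rule norm_triangle_ineq)
  also have "\<dots> \<le> (\<Sum>i<j. a * (cmod \<alpha>)^2 * nrm2 m (restr Q pos (col Q U f i c))
               + (cmod \<beta>)^2 * nrm2 m (restr Q pos (col Q U g i c)) / a)
       + (a * (cmod \<alpha>)^2 * nrm2 m ?ua + (cmod \<beta>)^2 * nrm2 m ?wa / a)"
    using Suc.IH Suc.prems am_gm_bound_sum[OF b1 b2] by simp
  finally show ?case by simp
qed


definition prefixes :: "('d, 'k, 'g) qalg \<Rightarrow> nat \<Rightarrow> nat list set" where
  "prefixes A l = {xs. length xs = l \<and> (\<forall>i<l. xs ! i < 2 ^ qalg0_qubits (qalg_comps A ! i))}"

definition wamp :: "('d, 'k, 'g) qalg \<Rightarrow> ('d \<Rightarrow> 'k) \<Rightarrow> nat list \<Rightarrow> complex" where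
  "wamp A f xs = (\<Prod>i<length xs. qalg0_mat (qalg_comps A ! i) f (xs ! i) (qalg_b A i (take i xs)))"

definition Gip :: "('d, 'k, 'g) qalg \<Rightarrow> ('d \<Rightarrow> 'k) \<Rightarrow> ('d \<Rightarrow> 'k) \<Rightarrow> nat \<Rightarrow> complex" where
  "Gip A f g l = (\<Sum>xs\<in>prefixes A l. cnj (wamp A f xs) * wamp A g xs)"

lemma prefixes_0: "prefixes A 0 = {[]}"
  by (auto simp: prefixes_def)

lemma Gip_0: "Gip A f g 0 = 1"
  by (simp add: Gip_def prefixes_0 wamp_def)

lemma prefixes_Suc:
  "prefixes A (Suc l) = (\<lambda>(p,z). p @ [z]) ` (prefixes A l \<times> {..<2 ^ qalg0_qubits (qalg_comps A ! l)})"
proof (rule set_eqI)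
  fix xs
  show "xs \<in> prefixes A (Suc l) \<longleftrightarrow> xs \<in> (\<lambda>(p,z). p @ [z]) ` (prefixes A l \<times> {..<2 ^ qalg0_qubits (qalg_comps A ! l)})"
  proof
    assume xs: "xs \<in> prefixes A (Suc l)"
    then have "xs \<noteq> []" by (auto simp: prefixes_def)
    then obtain p z where pz: "xs = p @ [z]" by (metis rev_exhaust)
    have len: "length p = l" using xs pz by (simp add: prefixes_def)
    have all: "\<forall>i<Suc l. (p @ [z]) ! i < 2 ^ qalg0_qubits (qalg_comps A ! i)"
      using xs pz by (simp add: prefixes_def)
    have "p \<in> prefixes A l"
    proof -
      have "\<forall>i<l. p ! i < 2 ^ qalg0_qubits (qalg_comps A ! i)"
      proof (intro allI impI)
        fix i assume "i < l"
        then show "p ! i < 2 ^ qalg0_qubits (qalg_comps A ! i)"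
          using all[rule_format, of i] len by (simp add: nth_append)
      qed
      then show ?thesis using len by (simp add: prefixes_def)
    qed
    moreover have "z < 2 ^ qalg0_qubits (qalg_comps A ! l)"
      using all len by (metis lessI nth_append_length)
    ultimately have "p \<in> prefixes A l" "z < 2 ^ qalg0_qubits (qalg_comps A ! l)" by auto
    then show "xs \<in> (\<lambda>(p,z). p @ [z]) ` (prefixes A l \<times> {..<2 ^ qalg0_qubits (qalg_comps A ! l)})"
      using pz by auto
  next
    assume "xs \<in> (\<lambda>(p,z). p @ [z]) ` (prefixes A l \<times> {..<2 ^ qalg0_qubits (qalg_comps A ! l)})"
    then show "xs \<in> prefixes A (Suc l)"
      by (auto simp: prefixes_def nth_append less_Suc_eq)
  qed
qed

lemma inj_snoc: "inj_on (\<lambda>(p,z). p @ [z]) X"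
  by (auto simp: inj_on_def)

lemma finite_prefixes: "finite (prefixes A l)"
proof (induction l)
  case 0 then show ?case by (simp add: prefixes_0)
next
  case (Suc l) then show ?case by (simp add: prefixes_Suc)
qed

lemma wamp_snoc:
  "wamp A f (p @ [z]) = wamp A f p * qalg0_mat (qalg_comps A ! length p) f z (qalg_b A (length p) p)"
proof -
  have "wamp A f (p @ [z]) = (\<Prod>i<length p. qalg0_mat (qalg_comps A ! i) f ((p@[z]) ! i) (qalg_b A i (take i (p@[z]))))
        * qalg0_mat (qalg_comps A ! length p) f z (qalg_b A (length p) p)"
    by (simp add: wamp_def)
  also have "(\<Prod>i<length p. qalg0_mat (qalg_comps A ! i) f ((p@[z]) ! i) (qalg_b A i (take i (p@[z])))) = wamp A f p"
    unfolding wamp_def by (intro prod.cong refl) (simp add: nth_append)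
  finally show ?thesis .
qed

lemma qalg0_mat_col: "qalg0_mat C f z c = col (fst C) (snd (snd C)) f (fst (snd C)) c z"
  by (cases C) (simp add: qalg0_mat_def col_def)

lemma Gip_Suc:
  "Gip A f g (Suc l) = (\<Sum>p\<in>prefixes A l. cnj (wamp A f p) * wamp A g p *
      ip (qalg0_qubits (qalg_comps A ! l))
         (col (fst (qalg_comps A ! l)) (snd (snd (qalg_comps A ! l))) f (fst (snd (qalg_comps A ! l))) (qalg_b A l p))
         (col (fst (qalg_comps A ! l)) (snd (snd (qalg_comps A ! l))) g (fst (snd (qalg_comps A ! l))) (qalg_b A l p)))"
proof -
  let ?M = "2 ^ qalg0_qubits (qalg_comps A ! l)"
  have "Gip A f g (Suc l) = (\<Sum>(p,z)\<in>prefixes A l \<times> {..<?M}. cnj (wamp A f (p @ [z])) * wamp A g (p @ [z]))"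
    unfolding Gip_def prefixes_Suc by (subst sum.reindex[OF inj_snoc]) (simp add: case_prod_beta')
  also have "\<dots> = (\<Sum>p\<in>prefixes A l. \<Sum>z<?M. cnj (wamp A f (p @ [z])) * wamp A g (p @ [z]))"
    by (rule sum.cartesian_product[symmetric])
  also have "\<dots> = (\<Sum>p\<in>prefixes A l. cnj (wamp A f p) * wamp A g p *
      ip (qalg0_qubits (qalg_comps A ! l))
         (col (fst (qalg_comps A ! l)) (snd (snd (qalg_comps A ! l))) f (fst (snd (qalg_comps A ! l))) (qalg_b A l p))
         (col (fst (qalg_comps A ! l)) (snd (snd (qalg_comps A ! l))) g (fst (snd (qalg_comps A ! l))) (qalg_b A l p)))"
  proof (intro sum.cong refl)
    fix p assume "p \<in> prefixes A l"
    then have lp: "length p = l" by (simp add: prefixes_def)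
    show "(\<Sum>z<?M. cnj (wamp A f (p @ [z])) * wamp A g (p @ [z])) = cnj (wamp A f p) * wamp A g p *
      ip (qalg0_qubits (qalg_comps A ! l))
         (col (fst (qalg_comps A ! l)) (snd (snd (qalg_comps A ! l))) f (fst (snd (qalg_comps A ! l))) (qalg_b A l p))
         (col (fst (qalg_comps A ! l)) (snd (snd (qalg_comps A ! l))) g (fst (snd (qalg_comps A ! l))) (qalg_b A l p))"
      unfolding wamp_snoc lp ip_def sum_distrib_left qalg0_mat_col
      by (intro sum.cong refl) (simp add: algebra_simps)
  qed
  finally show ?thesis .
qed


abbreviation "cQ A l \<equiv> fst (qalg_comps A ! l)"
abbreviation "cN A l \<equiv> fst (snd (qalg_comps A ! l))"
abbreviation "cU A l \<equiv> snd (snd (qalg_comps A ! l))"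
abbreviation "cM A l \<equiv> qalg0_qubits (qalg_comps A ! l)"

lemma valid_comp:
  assumes "valid_qalg D A" "l < length (qalg_comps A)"
  shows "valid_qalg0 D (cQ A l, cN A l, cU A l)" "cM A l = query_qubits (cQ A l)"
    "\<And>p. p \<in> prefixes A l \<Longrightarrow> qalg_b A l p < 2 ^ cM A l"
  using assms by (auto simp: valid_qalg_def qalg0_qubits_def prefixes_def)

lemma Gip_self_Suc:
  assumes "valid_qalg D A" "l < length (qalg_comps A)"
  shows "Gip A f f (Suc l) = Gip A f f l"
proof -
  note v = valid_comp[OF assms]
  show ?thesis unfolding Gip_Suc
    unfolding Gip_def ip_self
    using col_norm[OF v(1), of _ "cN A l" f] v(3) v(2) by simp
qed

lemma Gip_self:
  assumes "valid_qalg D A" "l \<le> length (qalg_comps A)"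
  shows "Gip A f f l = 1"
  using assms(2)
proof (induction l)
  case 0 then show ?case by (simp add: Gip_0)
next
  case (Suc l) then show ?case using Gip_self_Suc[OF assms(1), of l f] by simp
qed

lemma Gip_self_real: "Gip A f f l = complex_of_real (\<Sum>p\<in>prefixes A l. (cmod (wamp A f p))^2)"
  unfolding Gip_def cnj_mult_self by simp

definition Eterm :: "('d, 'k, 'g) qalg \<Rightarrow> ('d \<Rightarrow> 'k) \<Rightarrow> 'd \<Rightarrow> nat \<Rightarrow> real" where
  "Eterm A f pos l = (\<Sum>p\<in>prefixes A l. \<Sum>j<cN A l. (cmod (wamp A f p))^2 *
      nrm2 (cM A l) (restr (cQ A l) pos (col (cQ A l) (cU A l) f j (qalg_b A l p))))"

lemma Eterm_nonneg: "Eterm A f pos l \<ge> 0"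
  unfolding Eterm_def by (intro sum_nonneg mult_nonneg_nonneg) (auto simp: nrm2_nonneg)

lemma round_bound:
  assumes "valid_qalg D A" "l < length (qalg_comps A)"
    and diff: "\<forall>j. j \<noteq> pos \<longrightarrow> f j = g j" and a: "a > 0"
  shows "cmod (Gip A f g (Suc l) - Gip A f g l) \<le> a * Eterm A f pos l + Eterm A g pos l / a"
proof -
  note v = valid_comp[OF assms(1,2)]
  let ?ip = "\<lambda>p. ip (cM A l) (col (cQ A l) (cU A l) f (cN A l) (qalg_b A l p)) (col (cQ A l) (cU A l) g (cN A l) (qalg_b A l p))"
  have "Gip A f g (Suc l) - Gip A f g l = (\<Sum>p\<in>prefixes A l. cnj (wamp A f p) * wamp A g p * ?ip p - cnj (wamp A f p) * wamp A g p)"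
    unfolding Gip_Suc by (simp add: Gip_def sum_subtractf)
  then have "cmod (Gip A f g (Suc l) - Gip A f g l) \<le> (\<Sum>p\<in>prefixes A l. cmod (cnj (wamp A f p) * wamp A g p * ?ip p - cnj (wamp A f p) * wamp A g p))"
    by (simp add: norm_sum)
  also have "\<dots> \<le> (\<Sum>p\<in>prefixes A l. \<Sum>j<cN A l. a * (cmod (wamp A f p))^2 * nrm2 (cM A l) (restr (cQ A l) pos (col (cQ A l) (cU A l) f j (qalg_b A l p)))
        + (cmod (wamp A g p))^2 * nrm2 (cM A l) (restr (cQ A l) pos (col (cQ A l) (cU A l) g j (qalg_b A l p))) / a)"
  proof (rule sum_mono)
    fix p assume p: "p \<in> prefixes A l"
    show "cmod (cnj (wamp A f p) * wamp A g p * ?ip p - cnj (wamp A f p) * wamp A g p) \<le> (\<Sum>j<cN A l. a * (cmod (wamp A f p))^2 * nrm2 (cM A l) (restr (cQ A l) pos (col (cQ A l) (cU A l) f j (qalg_b A l p)))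
        + (cmod (wamp A g p))^2 * nrm2 (cM A l) (restr (cQ A l) pos (col (cQ A l) (cU A l) g j (qalg_b A l p))) / a)"
      using comp_bound[OF v(1) v(3)[OF p] v(2) diff a, of "cN A l" "wamp A f p" "wamp A g p"]
      by (simp add: mult.assoc)
  qed
  also have "\<dots> = a * Eterm A f pos l + Eterm A g pos l / a"
    unfolding Eterm_def sum.distrib sum_distrib_left sum_divide_distrib
    by (simp add: algebra_simps)
  finally show ?thesis .
qed

lemma Eterm_sum:
  assumes "valid_qalg D A" "l < length (qalg_comps A)" "finite S"
  shows "(\<Sum>pos\<in>S. Eterm A f pos l) \<le> real (cN A l)"
proof -
  note v = valid_comp[OF assms(1,2)]
  have "(\<Sum>pos\<in>S. Eterm A f pos l) = (\<Sum>p\<in>prefixes A l. \<Sum>j<cN A l. (cmod (wamp A f p))^2 *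
      (\<Sum>pos\<in>S. nrm2 (cM A l) (restr (cQ A l) pos (col (cQ A l) (cU A l) f j (qalg_b A l p)))))"
    unfolding Eterm_def sum_distrib_left
    by (subst sum.swap, rule sum.cong[OF refl], subst sum.swap, rule sum.cong[OF refl], rule refl)
  also have "\<dots> \<le> (\<Sum>p\<in>prefixes A l. \<Sum>j<cN A l. (cmod (wamp A f p))^2 * 1)"
  proof (intro sum_mono mult_left_mono)
    fix p j assume p: "p \<in> prefixes A l" and j: "j \<in> {..<cN A l}"
    show "(\<Sum>pos\<in>S. nrm2 (cM A l) (restr (cQ A l) pos (col (cQ A l) (cU A l) f j (qalg_b A l p)))) \<le> 1"
      using restr_sum_le[OF assms(3)] col_norm[OF v(1), of "qalg_b A l p" j f] v(2) v(3)[OF p] j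
      by (metis lessThan_iff less_imp_le)
  qed simp
  also have "\<dots> = real (cN A l) * (\<Sum>p\<in>prefixes A l. (cmod (wamp A f p))^2)"
    by (simp add: sum_distrib_left)
  also have "(\<Sum>p\<in>prefixes A l. (cmod (wamp A f p))^2) = 1"
    using Gip_self[OF assms(1), of l f] assms(2) Gip_self_real[of A f l]
    by (metis less_imp_le of_real_eq_1_iff)
  finally show ?thesis by simp
qed


definition Etot :: "('d, 'k, 'g) qalg \<Rightarrow> ('d \<Rightarrow> 'k) \<Rightarrow> 'd \<Rightarrow> real" where
  "Etot A f pos = (\<Sum>l<length (qalg_comps A). Eterm A f pos l)"

lemma Etot_nonneg: "Etot A f pos \<ge> 0"
  unfolding Etot_def by (intro sum_nonneg Eterm_nonneg)

lemma total_bound: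
  assumes "valid_qalg D A" and diff: "\<forall>j. j \<noteq> pos \<longrightarrow> f j = g j" and a: "a > 0"
  shows "cmod (Gip A f g (length (qalg_comps A)) - 1) \<le> a * Etot A f pos + Etot A g pos / a"
proof -
  have "l \<le> length (qalg_comps A) \<Longrightarrow> cmod (Gip A f g l - 1) \<le> (\<Sum>l'<l. a * Eterm A f pos l' + Eterm A g pos l' / a)" for l
  proof (induction l)
    case 0 then show ?case by (simp add: Gip_0)
  next
    case (Suc l)
    have "cmod (Gip A f g (Suc l) - 1) \<le> cmod (Gip A f g (Suc l) - Gip A f g l) + cmod (Gip A f g l - 1)"
      by (metis diff_add_cancel norm_triangle_ineq add.commute add_diff_eq)
    also have "\<dots> \<le> (a * Eterm A f pos l + Eterm A g pos l / a) + (\<Sum>l'<l. a * Eterm A f pos l' + Eterm A g pos l' / a)"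
      using round_bound[OF assms(1) _ diff a, of l] Suc by (intro add_mono) auto
    finally show ?case by simp
  qed
  from this[OF le_refl] show ?thesis
    by (simp add: Etot_def sum.distrib sum_distrib_left sum_divide_distrib)
qed

lemma Etot_sum:
  assumes "valid_qalg D A" "finite S"
  shows "(\<Sum>pos\<in>S. Etot A f pos) \<le> real (qalg_queries A)"
proof -
  have "(\<Sum>pos\<in>S. Etot A f pos) = (\<Sum>l<length (qalg_comps A). \<Sum>pos\<in>S. Eterm A f pos l)"
    unfolding Etot_def by (rule sum.swap)
  also have "\<dots> \<le> (\<Sum>l<length (qalg_comps A). real (cN A l))"
    by (intro sum_mono Eterm_sum[OF assms(1) _ assms(2)]) auto
  also have "\<dots> = real (qalg_queries A)"
    by (simp add: qalg_queries_def qalg0_queries_def)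
  finally show ?thesis .
qed

lemma outcomes_prefixes: "qalg_outcomes A = prefixes A (length (qalg_comps A))"
  by (auto simp: qalg_outcomes_def prefixes_def)

lemma prob_wamp:
  assumes "xs \<in> qalg_outcomes A"
  shows "qalg_prob A f xs = (cmod (wamp A f xs))^2"
proof -
  have "length xs = length (qalg_comps A)" using assms by (simp add: qalg_outcomes_def)
  then show ?thesis
    unfolding qalg_prob_def wamp_def prod_norm[symmetric] prod_power_distrib by simp
qed

lemma prob_total:
  assumes "valid_qalg D A"
  shows "(\<Sum>xs\<in>qalg_outcomes A. qalg_prob A f xs) = 1"
proof -
  have "Gip A f f (length (qalg_comps A)) = 1" using Gip_self[OF assms le_refl] .
  then have "complex_of_real (\<Sum>p\<in>prefixes A (length (qalg_comps A)). (cmod (wamp A f p))^2) = 1"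
    using Gip_self_real by metis
  then have "(\<Sum>p\<in>prefixes A (length (qalg_comps A)). (cmod (wamp A f p))^2) = 1"
    by (metis of_real_eq_1_iff)
  then show ?thesis
    using prob_wamp[of _ A f] unfolding outcomes_prefixes[symmetric]
    by (metis (no_types, lifting) sum.cong)
qed

lemma prob_nonneg: "qalg_prob A f xs \<ge> 0"
  by (simp add: qalg_prob_def prod_nonneg)

lemma finite_outcomes: "finite (qalg_outcomes A)"
  by (simp add: outcomes_prefixes finite_prefixes)

lemma uv1: "(u::real) * v \<le> u^2 + v^2 / 4"
proof -
  have "0 \<le> (u - v/2)^2" by simp
  then show ?thesis by (simp add: power2_eq_square algebra_simps)
qed

lemma uv2: "(u::real) * v \<le> u^2 / 4 + v^2"
  using uv1[of v u] by (simp add: mult.commute add.commute)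

lemma dist_bound:
  assumes "valid_qalg D A" "Gd \<subseteq> qalg_outcomes A"
    and f: "(\<Sum>xs\<in>qalg_outcomes A - Gd. qalg_prob A f xs) \<le> 1/4"
    and g: "(\<Sum>xs\<in>Gd. qalg_prob A g xs) \<le> 1/4"
  shows "cmod (Gip A f g (length (qalg_comps A))) \<le> 7/8"
proof -
  let ?O = "qalg_outcomes A"
  let ?u = "\<lambda>xs. cmod (wamp A f xs)" and ?v = "\<lambda>xs. cmod (wamp A g xs)"
  have fin: "finite ?O" by (rule finite_outcomes)
  have pu: "\<And>xs. xs \<in> ?O \<Longrightarrow> qalg_prob A f xs = (?u xs)^2"
   and pv: "\<And>xs. xs \<in> ?O \<Longrightarrow> qalg_prob A g xs = (?v xs)^2" by (rule prob_wamp, assumption)+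
  have split: "\<And>h. sum h ?O = sum h (?O - Gd) + sum h Gd"
    using sum.subset_diff[OF assms(2) fin] by simp
  have tf: "(\<Sum>xs\<in>?O. qalg_prob A f xs) = 1" and tg: "(\<Sum>xs\<in>?O. qalg_prob A g xs) = 1"
    using prob_total[OF assms(1)] by auto
  have "cmod (Gip A f g (length (qalg_comps A))) \<le> (\<Sum>xs\<in>?O. ?u xs * ?v xs)"
    unfolding Gip_def outcomes_prefixes[symmetric]
    by (rule order_trans[OF norm_sum]) (simp add: norm_mult)
  also have "\<dots> = (\<Sum>xs\<in>?O - Gd. ?u xs * ?v xs) + (\<Sum>xs\<in>Gd. ?u xs * ?v xs)" by (rule split)
  also have "\<dots> \<le> (\<Sum>xs\<in>?O - Gd. qalg_prob A f xs + qalg_prob A g xs / 4) + (\<Sum>xs\<in>Gd. qalg_prob A f xs / 4 + qalg_prob A g xs)"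
  proof (intro add_mono sum_mono)
    fix xs assume "xs \<in> ?O - Gd"
    then show "?u xs * ?v xs \<le> qalg_prob A f xs + qalg_prob A g xs / 4"
      using pu pv uv1[of "?u xs" "?v xs"] by simp
  next
    fix xs assume "xs \<in> Gd"
    then have "xs \<in> ?O" using assms(2) by auto
    then show "?u xs * ?v xs \<le> qalg_prob A f xs / 4 + qalg_prob A g xs"
      using pu pv uv2[of "?u xs" "?v xs"] by simp
  qed
  also have "\<dots> \<le> 7/8"
  proof -
    have "(\<Sum>xs\<in>?O - Gd. qalg_prob A f xs) + (\<Sum>xs\<in>Gd. qalg_prob A f xs) = 1"
      using tf split[of "qalg_prob A f"] by simp
    moreover have "(\<Sum>xs\<in>?O - Gd. qalg_prob A g xs) + (\<Sum>xs\<in>Gd. qalg_prob A g xs) = 1"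
      using tg split[of "qalg_prob A g"] by simp
    ultimately show ?thesis using f g
      by (simp add: sum.distrib sum_divide_distrib[symmetric])
  qed
  finally show ?thesis .
qed


lemma pair_reindex:
  fixes h :: "nat set \<Rightarrow> nat \<Rightarrow> real"
  shows "(\<Sum>x\<in>{x. x \<subseteq> {..<N} \<and> card x = t}. \<Sum>pos\<in>{..<N} - x. h (insert pos x) pos)
       = (\<Sum>y\<in>{y. y \<subseteq> {..<N} \<and> card y = Suc t}. \<Sum>pos\<in>y. h y pos)"
proof -
  let ?X = "{x. x \<subseteq> {..<N} \<and> card x = t}" and ?Y = "{y. y \<subseteq> {..<N} \<and> card y = Suc t}"
  have fX: "finite ?X" by (rule finite_subset[of _ "Pow {..<N}"]) auto
  have fY: "finite ?Y" by (rule finite_subset[of _ "Pow {..<N}"]) auto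
  have "(\<Sum>x\<in>?X. \<Sum>pos\<in>{..<N} - x. h (insert pos x) pos) = (\<Sum>(x,pos)\<in>Sigma ?X (\<lambda>x. {..<N} - x). h (insert pos x) pos)"
    by (rule sum.Sigma) (use fX in auto)
  also have "\<dots> = (\<Sum>(y,pos)\<in>Sigma ?Y (\<lambda>y. y). h y pos)"
  proof (rule sum.reindex_bij_witness[where i = "\<lambda>(y,pos). (y - {pos}, pos)" and j = "\<lambda>(x,pos). (insert pos x, pos)"])
    fix a assume "a \<in> Sigma ?X (\<lambda>x. {..<N} - x)"
    then obtain x pos where a: "a = (x,pos)" "x \<subseteq> {..<N}" "card x = t" "pos < N" "pos \<notin> x" by auto
    have fx: "finite x" using a(2) finite_subset by blast
    show "(\<lambda>(y,pos). (y - {pos}, pos)) ((\<lambda>(x,pos). (insert pos x, pos)) a) = a" using a by auto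
    show "(\<lambda>(x,pos). (insert pos x, pos)) a \<in> Sigma ?Y (\<lambda>y. y)" using a fx by auto
    show "(case (\<lambda>(x,pos). (insert pos x, pos)) a of (y, pos) \<Rightarrow> h y pos) = (case a of (x, pos) \<Rightarrow> h (insert pos x) pos)"
      using a by simp
  next
    fix b assume "b \<in> Sigma ?Y (\<lambda>y. y)"
    then obtain y pos where b: "b = (y,pos)" "y \<subseteq> {..<N}" "card y = Suc t" "pos \<in> y" by auto
    have fy: "finite y" using b(2) finite_subset by blast
    show "(\<lambda>(x,pos). (insert pos x, pos)) ((\<lambda>(y,pos). (y - {pos}, pos)) b) = b" using b by auto
    show "(\<lambda>(y,pos). (y - {pos}, pos)) b \<in> Sigma ?X (\<lambda>x. {..<N} - x)"
      using b fy by auto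
  qed
  also have "\<dots> = (\<Sum>y\<in>?Y. \<Sum>pos\<in>y. h y pos)"
    by (rule sum.Sigma[symmetric]) (use fY finite_subset in auto)
  finally show ?thesis .
qed

lemma card_rel:
  "real (card {x. x \<subseteq> {..<N} \<and> card x = t}) * real (N - t)
   = real (card {y. y \<subseteq> {..<N} \<and> card y = Suc t}) * real (Suc t)"
proof -
  have "(\<Sum>x\<in>{x. x \<subseteq> {..<N} \<and> card x = t}. \<Sum>pos\<in>{..<N} - x. (\<lambda>y p. 1::real) (insert pos x) pos)
       = (\<Sum>y\<in>{y. y \<subseteq> {..<N} \<and> card y = Suc t}. \<Sum>pos\<in>y. (\<lambda>y p. 1::real) y pos)"
    by (rule pair_reindex)
  moreover have "(\<Sum>x\<in>{x. x \<subseteq> {..<N} \<and> card x = t}. \<Sum>pos\<in>{..<N} - x. (1::real))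
      = (\<Sum>x\<in>{x. x \<subseteq> {..<N} \<and> card x = t}. real (N - t))"
    by (intro sum.cong refl) (auto simp: card_Diff_subset finite_subset)
  moreover have "(\<Sum>y\<in>{y. y \<subseteq> {..<N} \<and> card y = Suc t}. \<Sum>pos\<in>y. (1::real))
      = (\<Sum>y\<in>{y. y \<subseteq> {..<N} \<and> card y = Suc t}. real (Suc t))"
    by (intro sum.cong refl) auto
  ultimately show ?thesis by (simp add: mult.commute)
qed


lemma final_arith:
  fixes C M T nn a :: real
  assumes "C > 0" "M > 0" "T > 0" "nn > 0"
    and main: "C * M / 8 \<le> a * nn * C + nn * (C * M / T) / a"
    and a: "a = M / (32 * nn)"
  shows "3 * (M * T) \<le> 1024 * nn^2"
proof -
  have e1: "a * nn * C = C * (M / 32)" unfolding a using assms(1-4) by (simp add: field_simps)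
  have e2: "nn * (C * M / T) / a = C * (32 * nn^2 / T)" unfolding a using assms(1-4) by (simp add: field_simps power2_eq_square)
  have "C * (M / 8) \<le> C * (M / 32 + 32 * nn^2 / T)" using main unfolding e1 e2 by (simp add: algebra_simps)
  then have "M / 8 \<le> M / 32 + 32 * nn^2 / T" using assms(1) by (simp add: mult_le_cancel_left_pos)
  then have "T * (M / 8) \<le> T * (M / 32 + 32 * nn^2 / T)" using assms(3) by (simp add: mult_le_cancel_left_pos)
  then show ?thesis using assms(3) by (simp add: field_simps)
qed

lemma adversary:
  fixes F :: "nat set \<Rightarrow> nat \<Rightarrow> 'k" and A :: "(nat, 'k, 'g) qalg"
  assumes valid: "valid_qalg {..<N} A" and nq: "qalg_queries A \<le> n" and tN: "t < N" and n1: "n \<ge> 1"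
    and diff: "\<And>x pos j. j \<noteq> pos \<Longrightarrow> F (insert pos x) j = F x j"
    and hyp: "\<And>x pos. x \<subseteq> {..<N} \<Longrightarrow> card x = t \<Longrightarrow> pos < N \<Longrightarrow> pos \<notin> x \<Longrightarrow>
          cmod (Gip A (F x) (F (insert pos x)) (length (qalg_comps A))) \<le> 7/8"
  shows "3 * (real (N - t) * real (Suc t)) \<le> 1024 * (real n)^2"
proof -
  let ?X = "{x. x \<subseteq> {..<N} \<and> card x = t}" and ?Y = "{y. y \<subseteq> {..<N} \<and> card y = Suc t}"
  let ?k = "length (qalg_comps A)"
  define a where "a = real (N - t) / (32 * real n)"
  have a0: "a > 0" using tN n1 by (simp add: a_def)
  have "{..<t} \<in> ?X" using tN by auto
  then have Xne: "card ?X > 0"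
    by (metis (no_types, lifting) card_gt_0_iff empty_iff finite_subset Pow_iff subsetI mem_Collect_eq finite_Pow_iff finite_lessThan)
  have "(\<Sum>x\<in>?X. \<Sum>pos\<in>{..<N} - x. (1/8::real))
      \<le> (\<Sum>x\<in>?X. \<Sum>pos\<in>{..<N} - x. cmod (Gip A (F x) (F (insert pos x)) ?k - 1))"
  proof (intro sum_mono)
    fix x pos assume "x \<in> ?X" "pos \<in> {..<N} - x"
    then have "cmod (Gip A (F x) (F (insert pos x)) ?k) \<le> 7/8" using hyp by auto
    then show "1/8 \<le> cmod (Gip A (F x) (F (insert pos x)) ?k - 1)"
      using norm_triangle_ineq2[of 1 "Gip A (F x) (F (insert pos x)) ?k"]
      by (simp add: norm_minus_commute)
  qed
  also have "\<dots> \<le> (\<Sum>x\<in>?X. \<Sum>pos\<in>{..<N} - x. a * Etot A (F x) pos + Etot A (F (insert pos x)) pos / a)"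
  proof (intro sum_mono)
    fix x pos
    have "\<forall>j. j \<noteq> pos \<longrightarrow> F x j = F (insert pos x) j" using diff by simp
    then show "cmod (Gip A (F x) (F (insert pos x)) ?k - 1) \<le> a * Etot A (F x) pos + Etot A (F (insert pos x)) pos / a"
      by (rule total_bound[OF valid _ a0])
  qed
  also have "\<dots> = a * (\<Sum>x\<in>?X. \<Sum>pos\<in>{..<N} - x. Etot A (F x) pos)
      + (\<Sum>x\<in>?X. \<Sum>pos\<in>{..<N} - x. (\<lambda>y p. Etot A (F y) p) (insert pos x) pos) / a"
    by (simp add: sum.distrib sum_distrib_left sum_divide_distrib)
  also have "\<dots> = a * (\<Sum>x\<in>?X. \<Sum>pos\<in>{..<N} - x. Etot A (F x) pos)
      + (\<Sum>y\<in>?Y. \<Sum>pos\<in>y. Etot A (F y) pos) / a"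
    by (subst pair_reindex) simp
  also have "\<dots> \<le> a * (\<Sum>x\<in>?X. real n) + (\<Sum>y\<in>?Y. real n) / a"
  proof (intro add_mono mult_left_mono divide_right_mono sum_mono)
    fix x assume "x \<in> ?X"
    then have "finite ({..<N} - x)" by simp
    then show "(\<Sum>pos\<in>{..<N} - x. Etot A (F x) pos) \<le> real n"
      using Etot_sum[OF valid] nq by (meson of_nat_le_iff order_trans)
  next
    fix y assume "y \<in> ?Y"
    then have "finite y" using finite_subset by blast
    then show "(\<Sum>pos\<in>y. Etot A (F y) pos) \<le> real n"
      using Etot_sum[OF valid] nq by (meson of_nat_le_iff order_trans)
  qed (use a0 in auto)
  finally have main0: "(\<Sum>x\<in>?X. \<Sum>pos\<in>{..<N} - x. (1/8::real)) \<le> a * (\<Sum>x\<in>?X. real n) + (\<Sum>y\<in>?Y. real n) / a" .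
  have lhs: "(\<Sum>x\<in>?X. \<Sum>pos\<in>{..<N} - x. (1/8::real)) = (\<Sum>x\<in>?X. real (N - t) / 8)"
  proof (intro sum.cong refl)
    fix x assume x: "x \<in> ?X"
    then have "finite x" using finite_subset by blast
    then have "card ({..<N} - x) = N - t" using x by (simp add: card_Diff_subset)
    then show "(\<Sum>pos\<in>{..<N} - x. (1/8::real)) = real (N - t) / 8" by simp
  qed
  have main: "real (card ?X) * real (N - t) / 8 \<le> a * real n * real (card ?X) + real n * real (card ?Y) / a"
    using main0 unfolding lhs by (simp add: algebra_simps)
  have cY: "real (card ?Y) = real (card ?X) * real (N - t) / real (Suc t)"
    using card_rel[of N t] by (simp add: field_simps)
  show ?thesis
    by (rule final_arith[OF _ _ _ _ main[unfolded cY] a_def]) (use tN n1 Xne in auto)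
qed


definition Find :: "real \<Rightarrow> nat set \<Rightarrow> nat \<Rightarrow> real" where
  "Find lam x i = (if i \<in> x then lam else 0)"

lemma Find_sum: "x \<subseteq> {..<N} \<Longrightarrow> (\<Sum>i<N. Find lam x i) = real (card x) * lam"
proof -
  assume x: "x \<subseteq> {..<N}"
  have "(\<Sum>i<N. Find lam x i) = (\<Sum>i\<in>{..<N} \<inter> x. lam)"
    unfolding Find_def by (subst sum.inter_restrict) auto
  also have "{..<N} \<inter> x = x" using x by auto
  finally show ?thesis by simp
qed

lemma Find_ball:
  assumes p: "p \<ge> 1" and x: "x \<subseteq> {..<N}" "card x \<le> m" and m: "m > 0" and N: "N > 0"
    and lam: "lam = (real N / real m) powr (1 / p)"
  shows "Find lam x \<in> Lp_ball N p"
proof -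
  have l0: "lam \<ge> 0" using lam by simp
  have lp: "lam powr p = real N / real m"
    using lam p N m by (simp add: powr_powr)
  have "(\<Sum>i<N. \<bar>Find lam x i\<bar> powr p) = (\<Sum>i<N. Find (lam powr p) x i)"
    using p l0 by (intro sum.cong refl) (auto simp: Find_def)
  also have "\<dots> = real (card x) * (real N / real m)" using Find_sum[OF x(1)] lp by simp
  finally have s: "(\<Sum>i<N. \<bar>Find lam x i\<bar> powr p) = real (card x) * (real N / real m)" .
  have "Lp_norm N p (Find lam x) = (real (card x) / real m) powr (1 / p)"
    unfolding Lp_norm_def s using N by simp
  also have "\<dots> \<le> 1"
    using x(2) m p by (intro powr_le1) (auto simp: divide_le_eq_1)
  finally have "Lp_norm N p (Find lam x) \<le> 1" .
  moreover have "\<forall>i\<ge>N. Find lam x i = 0" using x(1) by (auto simp: Find_def)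
  ultimately show ?thesis by (simp add: Lp_ball_def)
qed

lemma Find_mean: "x \<subseteq> {..<N} \<Longrightarrow> S_mean N (Find lam x) = real (card x) * lam / real N"
  by (simp add: S_mean_def Find_sum)

lemma Find_diff: "j \<noteq> pos \<Longrightarrow> Find lam (insert pos x) j = Find lam x j"
  by (simp add: Find_def)


lemma lb_ereal:
  fixes p :: real
  assumes p: "p \<ge> 1" and n1: "n \<ge> 1" and tN: "t < N"
    and big: "1024 * (real n)^2 < 3 * (real (N - t) * real (Suc t))"
    and lam: "lam = (real N / real (Suc t)) powr (1/p)"
  shows "ereal (lam / (2 * real N)) \<le> min_query_error {..<N} (S_mean N) (Lp_ball N p) n"
proof -
  define r where "r = lam / (2 * real N)"
  have N0: "N > 0" using tN by simp
  have lam0: "lam > 0" using lam N0 by simp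
  have r0: "r > 0" using lam0 N0 by (simp add: r_def)
  show ?thesis unfolding min_query_error_def r_def[symmetric]
  proof (rule INF_greatest)
    fix A :: "(nat, real, real) qalg"
    assume "A \<in> {A. valid_qalg {..<N} A \<and> qalg_queries A \<le> n}"
    then have valid: "valid_qalg {..<N} A" and nq: "qalg_queries A \<le> n" by auto
    show "ereal r \<le> qerr (S_mean N) A (Lp_ball N p)"
    proof (rule ccontr)
      assume "\<not> ereal r \<le> qerr (S_mean N) A (Lp_ball N p)"
      then have lt: "qerr (S_mean N) A (Lp_ball N p) < ereal r" by simp
      have good: "\<exists>eps. eps < r \<and> (\<Sum>xs\<in>{xs \<in> qalg_outcomes A. norm (S_mean N f - qalg_phi A xs) > eps}. qalg_prob A f xs) \<le> 1/4"
        if f: "f \<in> Lp_ball N p" for f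
      proof -
        have "qerr_f (S_mean N) A f \<le> qerr (S_mean N) A (Lp_ball N p)"
          unfolding qerr_def using f by (rule SUP_upper)
        then have "qerr_f (S_mean N) A f < ereal r" using lt by simp
        then obtain e where e: "e \<in> {ereal eps | eps. (\<Sum>xs\<in>{xs \<in> qalg_outcomes A. norm (S_mean N f - qalg_phi A xs) > eps}. qalg_prob A f xs) \<le> 1/4}" "e < ereal r"
          unfolding qerr_f_def Inf_less_iff by blast
        then show ?thesis by auto
      qed
      have "3 * (real (N - t) * real (Suc t)) \<le> 1024 * (real n)^2"
      proof (rule adversary[OF valid nq tN n1, of "Find lam"])
        fix x :: "nat set" and pos j :: nat assume "j \<noteq> pos"
        then show "Find lam (insert pos x) j = Find lam x j" by (rule Find_diff)
      next
        fix x pos assume x: "x \<subseteq> {..<N}" "card x = t" and pos: "pos < N" "pos \<notin> x"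
        let ?f = "Find lam x" and ?g = "Find lam (insert pos x)"
        have fx: "finite x" using x(1) finite_subset by blast
        have x': "insert pos x \<subseteq> {..<N}" "card (insert pos x) = Suc t" using x pos fx by auto
        have fb: "?f \<in> Lp_ball N p" by (rule Find_ball[OF p x(1) _ _ N0 lam]) (use x in auto)
        have gb: "?g \<in> Lp_ball N p" by (rule Find_ball[OF p x'(1) _ _ N0 lam]) (use x' in auto)
        have Sf: "S_mean N ?f = real t * lam / real N" using Find_mean[OF x(1)] x(2) by simp
        have Sg: "S_mean N ?g = real (Suc t) * lam / real N" using Find_mean[OF x'(1)] x'(2) by simp
        obtain ef where ef: "ef < r" "(\<Sum>xs\<in>{xs \<in> qalg_outcomes A. norm (S_mean N ?f - qalg_phi A xs) > ef}. qalg_prob A ?f xs) \<le> 1/4"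
          using good[OF fb] by blast
        obtain eg where eg: "eg < r" "(\<Sum>xs\<in>{xs \<in> qalg_outcomes A. norm (S_mean N ?g - qalg_phi A xs) > eg}. qalg_prob A ?g xs) \<le> 1/4"
          using good[OF gb] by blast
        define Gd where "Gd = {xs \<in> qalg_outcomes A. \<bar>real t * lam / real N - qalg_phi A xs\<bar> < r}"
        have fin: "finite (qalg_outcomes A)" by (rule finite_outcomes)
        have s1: "(\<Sum>xs\<in>qalg_outcomes A - Gd. qalg_prob A ?f xs) \<le> 1/4"
        proof -
          have "qalg_outcomes A - Gd \<subseteq> {xs \<in> qalg_outcomes A. norm (S_mean N ?f - qalg_phi A xs) > ef}"
            using ef(1) unfolding Gd_def Sf by auto
          then have "(\<Sum>xs\<in>qalg_outcomes A - Gd. qalg_prob A ?f xs) \<le> (\<Sum>xs\<in>{xs \<in> qalg_outcomes A. norm (S_mean N ?f - qalg_phi A xs) > ef}. qalg_prob A ?f xs)"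
            by (intro sum_mono2) (use fin in \<open>auto intro: prob_nonneg\<close>)
          then show ?thesis using ef(2) by simp
        qed
        have s2: "(\<Sum>xs\<in>Gd. qalg_prob A ?g xs) \<le> 1/4"
        proof -
          have d: "real (Suc t) * lam / real N - real t * lam / real N = 2 * r"
            using N0 by (simp add: r_def field_simps)
          have "Gd \<subseteq> {xs \<in> qalg_outcomes A. norm (S_mean N ?g - qalg_phi A xs) > eg}"
            using eg(1) d unfolding Gd_def Sg by auto
          then have "(\<Sum>xs\<in>Gd. qalg_prob A ?g xs) \<le> (\<Sum>xs\<in>{xs \<in> qalg_outcomes A. norm (S_mean N ?g - qalg_phi A xs) > eg}. qalg_prob A ?g xs)"
            by (intro sum_mono2) (use fin in \<open>auto intro: prob_nonneg\<close>)
          then show ?thesis using eg(2) by simp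
        qed
        show "cmod (Gip A ?f ?g (length (qalg_comps A))) \<le> 7/8"
          by (rule dist_bound[OF valid _ s1 s2]) (auto simp: Gd_def)
      qed
      then show False using big by simp
    qed
  qed
qed


lemma arith_main:
  fixes p :: real and n N :: nat
  assumes p: "1 \<le> p" "p < 2" and H: "1 \<le> n" "1 \<le> N" "sqrt (real N) \<le> real n" "real n \<le> 1/100 * real N"
  defines "t \<equiv> 1000 * n^2 div N"
  shows "t < N" "1024 * (real n)^2 < 3 * (real (N - t) * real (Suc t))"
    "1/4000 * real n powr (-2/p) * real N powr (2/p - 1) \<le> (real N / real (Suc t)) powr (1/p) / (2 * real N)"
proof -
  have N0: "real N > 0" using H by simp
  have n0: "real n > 0" using H by simp
  have nN: "real N \<le> (real n)^2"
  proof -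
    have "(sqrt (real N))^2 \<le> (real n)^2" using H(3) by (intro power_mono) auto
    then show ?thesis by simp
  qed
  have N100: "real N \<ge> 100" using H by simp
  have tlo_nat: "1000 * n^2 < Suc t * N"
  proof -
    have "1000 * n^2 = t * N + (1000 * n^2) mod N" unfolding t_def by simp
    moreover have "(1000 * n^2) mod N < N" using H by simp
    ultimately show ?thesis by simp
  qed
  have tup_nat: "t * N \<le> 1000 * n^2" unfolding t_def by (rule div_times_less_eq_dividend)
  have tlo: "1000 * (real n)^2 < real (Suc t) * real N"
    using tlo_nat by (metis of_nat_less_iff of_nat_mult of_nat_power of_nat_numeral)
  have tup: "real t * real N \<le> 1000 * (real n)^2"
    using tup_nat by (metis of_nat_le_iff of_nat_mult of_nat_power of_nat_numeral)
  have "1000 * (real n)^2 \<le> real N * real N / 10"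
  proof -
    have "(real n)^2 \<le> (real N / 100)^2" using H(4) n0 by (intro power_mono) auto
    then show ?thesis by (simp add: power2_eq_square)
  qed
  then have "real t * real N \<le> (real N / 10) * real N" using tup by simp
  then have t10: "real t \<le> real N / 10" using N0 by (simp add: mult_le_cancel_right_pos)
  then show tN: "t < N" using N0 by linarith
  have NT: "real (N - t) \<ge> 9/10 * real N" using t10 tN by (simp add: of_nat_diff)
  have "900 * (real n)^2 \<le> 9/10 * (real (Suc t) * real N)" using tlo by linarith
  also have "\<dots> = real (Suc t) * (9/10 * real N)" by simp
  also have "\<dots> \<le> real (Suc t) * real (N - t)" using NT by (intro mult_left_mono) auto
  finally have "900 * (real n)^2 \<le> real (N - t) * real (Suc t)" by (simp add: mult.commute)
  moreover have "(real n)^2 > 0" using n0 by simp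
  ultimately show "1024 * (real n)^2 < 3 * (real (N - t) * real (Suc t))" by linarith
  have st: "real (Suc t) \<le> 2000 * (real n)^2 / real N"
  proof -
    have "real t \<le> 1000 * (real n)^2 / real N" using tup N0 by (simp add: field_simps)
    moreover have "1 \<le> 1000 * (real n)^2 / real N"
    proof -
      have "real N \<le> 1000 * (real n)^2" using nN zero_le_power2[of "real n"] by linarith
      then show ?thesis using N0 by (simp add: le_divide_eq)
    qed
    ultimately show ?thesis by simp
  qed
  have st0: "real (Suc t) > 0" by simp
  have q: "(real N / real n)^2 / 2000 \<le> real N / real (Suc t)"
  proof -
    have "(real N / real n)^2 / 2000 = real N / (2000 * (real n)^2 / real N)"
      using N0 n0 by (simp add: field_simps power2_eq_square)
    also have "\<dots> \<le> real N / real (Suc t)"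
    proof (rule divide_left_mono)
      have "0 < 2000 * (real n)^2 / real N" using n0 N0 by simp
      then show "0 < 2000 * (real n)^2 / real N * real (Suc t)" using st0 by (rule mult_pos_pos)
    qed (use st N0 in auto)
    finally show ?thesis .
  qed
  have p0: "p > 0" using p by simp
  have "((real N / real n)^2 / 2000) powr (1/p) \<le> (real N / real (Suc t)) powr (1/p)"
    using q p0 by (intro powr_mono2) auto
  moreover have "((real N / real n)^2 / 2000) powr (1/p) = (real N / real n) powr (2/p) * (1/2000) powr (1/p)"
  proof -
    have e: "(real N / real n)^2 / 2000 = (real N / real n)^2 * (1/2000)" by simp
    have "((real N / real n)^2) powr (1/p) = (real N / real n) powr (2/p)"
      using N0 n0 powr_powr[of "real N / real n" 2 "1/p"] powr_realpow[of "real N / real n" 2] by simp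
    then show ?thesis unfolding e powr_mult by simp
  qed
  moreover have c: "(1/2000::real) powr (1/p) \<ge> (1/2000) powr 1"
    using p by (intro powr_mono') (auto simp: field_simps)
  ultimately have lamlo: "(real N / real n) powr (2/p) / 2000 \<le> (real N / real (Suc t)) powr (1/p)"
  proof -
    assume a1: "((real N / real n)^2 / 2000) powr (1/p) \<le> (real N / real (Suc t)) powr (1/p)"
      and a2: "((real N / real n)^2 / 2000) powr (1/p) = (real N / real n) powr (2/p) * (1/2000) powr (1/p)"
    have "(real N / real n) powr (2/p) / 2000 = (real N / real n) powr (2/p) * (1/2000) powr 1" by simp
    also have "\<dots> \<le> (real N / real n) powr (2/p) * (1/2000) powr (1/p)"
      using c by (intro mult_left_mono) auto
    finally show ?thesis using a1 a2 by simp
  qed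
  have e1: "real n powr (-2/p) = 1 / real n powr (2/p)"
    using powr_minus_divide[of "real n" "2/p"] by simp
  have e2: "real N powr (2/p - 1) = real N powr (2/p) / real N"
    using N0 by (simp add: powr_diff)
  have e3: "(real N / real n) powr (2/p) = real N powr (2/p) / real n powr (2/p)"
    by (rule powr_divide)
  have pos: "real n powr (2/p) > 0" using n0 by simp
  have "1/4000 * real n powr (-2/p) * real N powr (2/p - 1) = (real N / real n) powr (2/p) / 2000 / (2 * real N)"
    unfolding e1 e2 e3 using pos N0 by (simp add: field_simps)
  also have "\<dots> \<le> (real N / real (Suc t)) powr (1/p) / (2 * real N)"
    using lamlo N0 by (intro divide_right_mono) auto
  finally show "1/4000 * real n powr (-2/p) * real N powr (2/p - 1) \<le> (real N / real (Suc t)) powr (1/p) / (2 * real N)" .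
qed

theorem theorem4:
  fixes p :: real
  assumes "1 \<le> p" and "p < 2"
  shows "\<exists>c0 c1 c2 :: real. c0 > 0 \<and> c1 > 0 \<and> c2 > 0 \<and>
    (\<forall>n N :: nat. 1 \<le> n \<and> 1 \<le> N \<and> c0 * sqrt (real N) \<le> real n \<and> real n \<le> c1 * real N \<longrightarrow>
       min_query_error {..<N} (S_mean N) (Lp_ball N p) n
         \<ge> ereal (c2 * real n powr (-2 / p) * real N powr (2 / p - 1)))"
proof (rule exI[of _ "1::real"], rule exI[of _ "1/100::real"], rule exI[of _ "1/4000::real"], intro conjI allI impI)
  fix n N :: nat
  assume H: "1 \<le> n \<and> 1 \<le> N \<and> 1 * sqrt (real N) \<le> real n \<and> real n \<le> 1/100 * real N"
  then have H': "1 \<le> n" "1 \<le> N" "sqrt (real N) \<le> real n" "real n \<le> 1/100 * real N" by auto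
  define t where "t = 1000 * n^2 div N"
  note A = arith_main[OF assms H', folded t_def]
  have "ereal (1/4000 * real n powr (-2/p) * real N powr (2/p - 1)) \<le> ereal ((real N / real (Suc t)) powr (1/p) / (2 * real N))"
    using A(3) by simp
  also have "\<dots> \<le> min_query_error {..<N} (S_mean N) (Lp_ball N p) n"
    by (rule lb_ereal[OF assms(1) H'(1) A(1) A(2) refl])
  finally show "min_query_error {..<N} (S_mean N) (Lp_ball N p) n \<ge> ereal (1/4000 * real n powr (-2/p) * real N powr (2/p - 1))" .
qed simp_all

end
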